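(* For all integers $n,r\ge 1$, the diameter of $G(n,r)$ equals $(n-1)r$.
   Context: For integers $n,r\ge 1$, $G(n,r)$ is the simple undirected graph whose vertices are the $n\times n$ matrices with non-negative integer entries all of whose row sums and column sums equal $r$. Let $e_{ij}$ be the $n\times n$ matrix with a $1$ in position $(i,j)$ and $0$ elsewhere, and let $\mathcal{B}=\{\pm(e_{ij}+e_{kl}-e_{il}-e_{kj}) : 1\le i<k\le n,\ 1\le j<l\le n\}$. Two vertices $u,v$ are adjacent iff $u-v\in\mathcal{B}$. The diameter is the maximum over pairs of vertices of the shortest-path distance. *)

theory Defs
  imports Main
begin

text \<open>An n x n integer matrix is represented as a function nat => nat => int,
  indices 0..n-1 (0-based), and entries outside {0..<n} x {0..<n} are required to be 0.\<close>

type_synonym imat = "nat \<Rightarrow> nat \<Rightarrow> int"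

definition emat :: "nat \<Rightarrow> nat \<Rightarrow> imat" where
  "emat i j = (\<lambda>a b. if a = i \<and> b = j then 1 else 0)"

definition vertices :: "nat \<Rightarrow> nat \<Rightarrow> imat set" where
  "vertices n r = {M. (\<forall>a b. (a \<ge> n \<or> b \<ge> n) \<longrightarrow> M a b = 0)
                    \<and> (\<forall>a b. 0 \<le> M a b)
                    \<and> (\<forall>a<n. (\<Sum>b<n. M a b) = int r)
                    \<and> (\<forall>b<n. (\<Sum>a<n. M a b) = int r)}"

definition moves :: "nat \<Rightarrow> imat set" where
  "moves n = {M. \<exists>i k j l s. i < k \<and> k < n \<and> j < l \<and> l < n \<and> (s = 1 \<or> s = -1) \<and>
      M = (\<lambda>a b. s * (emat i j a b + emat k l a b - emat i l a b - emat k j a b))}"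

definition edges :: "nat \<Rightarrow> nat \<Rightarrow> (imat \<times> imat) set" where
  "edges n r = {(u, v). u \<in> vertices n r \<and> v \<in> vertices n r \<and> (\<lambda>a b. u a b - v a b) \<in> moves n}"

definition gdist :: "nat \<Rightarrow> nat \<Rightarrow> imat \<Rightarrow> imat \<Rightarrow> nat" where
  "gdist n r u v = (LEAST m. (u, v) \<in> edges n r ^^ m)"

definition connected_G :: "nat \<Rightarrow> nat \<Rightarrow> bool" where
  "connected_G n r = (\<forall>u\<in>vertices n r. \<forall>v\<in>vertices n r. (u, v) \<in> (edges n r)\<^sup>*)"

definition diameter :: "nat \<Rightarrow> nat \<Rightarrow> nat" where
  "diameter n r = Max {gdist n r u v | u v. u \<in> vertices n r \<and> v \<in> vertices n r}"

end

theory Submission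
  imports Defs
begin


definition sw :: "nat \<Rightarrow> nat \<Rightarrow> nat \<Rightarrow> nat \<Rightarrow> imat" where
  "sw i j k l = (\<lambda>a b. emat i j a b + emat k l a b - emat i l a b - emat k j a b)"

lemma moves_base:
  assumes "i<k" "k<n" "j<l" "l<n" "s=1 \<or> s=-1"
  shows "(\<lambda>a b. s * sw i j k l a b) \<in> moves n"
  unfolding moves_def sw_def using assms by blast

lemma moves_ik:
  assumes "i<k" "k<n" "j\<noteq>l" "j<n" "l<n" "s=1 \<or> s=-1"
  shows "(\<lambda>a b. s * sw i j k l a b) \<in> moves n"
proof (cases "j<l")
  case True thus ?thesis using moves_base assms by blast
next
  case False then have "l<j" using assms by simp
  have "(\<lambda>a b. s * sw i j k l a b) = (\<lambda>a b. (-s) * sw i l k j a b)"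
    by (auto simp: sw_def fun_eq_iff algebra_simps)
  moreover have "(\<lambda>a b. (-s) * sw i l k j a b) \<in> moves n"
    using moves_base[of i k n l j "-s"] assms \<open>l<j\<close> by auto
  ultimately show ?thesis by simp
qed

lemma moves_any:
  assumes "i\<noteq>k" "i<n" "k<n" "j\<noteq>l" "j<n" "l<n" "s=1 \<or> s=-1"
  shows "(\<lambda>a b. s * sw i j k l a b) \<in> moves n"
proof (cases "i<k")
  case True thus ?thesis using moves_ik assms by blast
next
  case False
  have "sw i j k l = sw k l i j" by (auto simp: sw_def fun_eq_iff)
  then show ?thesis using moves_ik[of k i n l j s] assms False by auto
qed

lemma sum_emat_row: "q < n \<Longrightarrow> (\<Sum>b<n. emat p q x b) = (if x = p then 1 else 0)"
  by (simp add: emat_def)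

lemma sum_emat_col: "p < n \<Longrightarrow> (\<Sum>a<n. emat p q a y) = (if y = q then 1 else 0)"
  by (simp add: emat_def)

lemma sum_sw_row: "j<n \<Longrightarrow> l<n \<Longrightarrow> (\<Sum>b<n. sw i j k l x b) = 0"
  by (simp add: sw_def sum.distrib sum_subtractf sum_emat_row)

lemma sum_sw_col: "i<n \<Longrightarrow> k<n \<Longrightarrow> (\<Sum>a<n. sw i j k l a y) = 0"
  by (simp add: sw_def sum.distrib sum_subtractf sum_emat_col)

definition phi :: "nat \<Rightarrow> imat \<Rightarrow> int" where
  "phi n M = (\<Sum>a<n. \<Sum>b<n. if b \<le> a then M a b else 0)"

lemma phi_diff: "phi n (\<lambda>a b. x a b - y a b) = phi n x - phi n y"
proof -
  have "\<And>a b. (if b \<le> a then x a b - y a b else 0) = (if b\<le>a then x a b else 0) - (if b \<le> a then y a b else (0::int))" by simp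
  then show ?thesis unfolding phi_def by (simp add: sum_subtractf)
qed

lemma phi_smult: "phi n (\<lambda>a b. s * M a b) = s * phi n M"
proof -
  have "\<And>a b. (if b \<le> a then s * M a b else 0) = s * (if b \<le> a then M a b else 0)" by simp
  then show ?thesis unfolding phi_def by (simp add: sum_distrib_left)
qed

lemma phi_move:
  assumes "i<k" "k<n" "j<l" "l<n" "s=1 \<or> s=-1"
  shows "\<bar>phi n (\<lambda>a b. s * (emat i j a b + emat k l a b - emat i l a b - emat k j a b))\<bar> \<le> 1"
proof -
  define t where "t p q = (if q \<le> p then (1::int) else 0)" for p q :: nat
  have e: "(if b \<le> a then (emat i j a b + emat k l a b - emat i l a b - emat k j a b) else 0)
     = ((if b = j then (if a = i then t i j else 0) else 0) + (if b = l then (if a = k then t k l else 0) else 0))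
         - (if b = l then (if a = i then t i l else 0) else 0) - (if b = j then (if a = k then t k j else 0) else 0)" for a b
    by (auto simp: emat_def t_def)
  have "phi n (\<lambda>a b. (emat i j a b + emat k l a b - emat i l a b - emat k j a b))
     = (t i j + t k l - t i l - t k j)"
    unfolding phi_def e using assms
    by (simp add: sum.distrib sum_subtractf)
  moreover have "\<bar>t i j + t k l - t i l - t k j\<bar> \<le> 1" using assms by (auto simp: t_def)
  ultimately show ?thesis using assms by (auto simp: abs_mult phi_smult)
qed

lemma phi_edge: assumes "(x, y) \<in> edges n r" shows "\<bar>phi n x - phi n y\<bar> \<le> 1"
proof -
  obtain i k j l s where h: "i < k \<and> k < n \<and> j < l \<and> l < n \<and> (s = 1 \<or> s = -1)"
    "(\<lambda>a b. x a b - y a b) = (\<lambda>a b. s * (emat i j a b + emat k l a b - emat i l a b - emat k j a b))"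
    using assms unfolding edges_def moves_def by blast
  have "phi n x - phi n y = phi n (\<lambda>a b. x a b - y a b)" by (simp add: phi_diff)
  also have "\<dots> = phi n (\<lambda>a b. s * (emat i j a b + emat k l a b - emat i l a b - emat k j a b))" using h(2) by simp
  finally show ?thesis using phi_move[of i k n j l s] h(1) by simp
qed

lemma phi_path: "(x, y) \<in> edges n r ^^ m \<Longrightarrow> \<bar>phi n x - phi n y\<bar> \<le> int m"
proof (induction m arbitrary: y)
  case 0 then show ?case by simp
next
  case (Suc m)
  then obtain z where "(x,z) \<in> edges n r ^^ m" "(z,y) \<in> edges n r" by auto
  with Suc.IH[of z] phi_edge[of z y n r] show ?case by auto
qed



definition T :: "nat \<Rightarrow> imat \<Rightarrow> imat \<Rightarrow> int" where
  "T n v u = (\<Sum>a<n-1. \<Sum>b<n. max 0 (v a b - u a b))"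

lemma T_nonneg: "T n v u \<ge> 0" unfolding T_def by (intro sum_nonneg) auto

lemma T_bound:
  assumes u: "u \<in> vertices n r" and v: "v \<in> vertices n r"
  shows "T n v u \<le> int ((n-1)*r)"
proof -
  have "T n v u \<le> (\<Sum>a<n-1. \<Sum>b<n. v a b)" unfolding T_def
    using u v by (intro sum_mono) (auto simp: vertices_def)
  also have "\<dots> = (\<Sum>a<n-1. int r)" using v by (intro sum.cong) (auto simp: vertices_def)
  finally show ?thesis by simp
qed

lemma vert_out: "u \<in> vertices n r \<Longrightarrow> a \<ge> n \<or> b \<ge> n \<Longrightarrow> u a b = 0"
  by (auto simp: vertices_def)

lemma upper:
  assumes v: "v \<in> vertices n r"
  shows "u \<in> vertices n r \<Longrightarrow> \<exists>m. (u,v) \<in> edges n r ^^ m \<and> int m \<le> T n v u"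
proof (induction "nat (T n v u)" arbitrary: u rule: less_induct)
  case less
  note uV = less.prems
  show ?case
  proof (cases "u = v")
    case True then show ?thesis using T_nonneg by (intro exI[of _ 0]) auto
  next
    case False
    have ex: "\<exists>x y. u x y \<noteq> v x y" using False by (auto simp: fun_eq_iff)
    define k where "k = (LEAST x. \<exists>y. u x y \<noteq> v x y)"
    have k1: "\<exists>y. u k y \<noteq> v k y" using LeastI_ex[OF ex] unfolding k_def .
    have k2: "u x y = v x y" if "x < k" for x y
      using not_less_Least[OF that[unfolded k_def]] by blast
    have kn: "k < n" using k1 vert_out[OF uV] vert_out[OF v] by (metis not_less)
    have kn1: "k < n - 1"
    proof (rule ccontr)
      assume "\<not> k < n - 1"
      then have nk: "n = Suc k" using kn by simp
      have "u k y = v k y" for y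
      proof (cases "y < n")
        case True
        have "(\<Sum>a<n. u a y) = (\<Sum>a<n. v a y)" using uV v True by (simp add: vertices_def)
        then have "(\<Sum>a<k. u a y) + u k y = (\<Sum>a<k. v a y) + v k y" by (simp add: nk)
        moreover have "(\<Sum>a<k. u a y) = (\<Sum>a<k. v a y)" using k2 by (intro sum.cong) auto
        ultimately show ?thesis by simp
      next
        case False then show ?thesis using vert_out[OF uV] vert_out[OF v] by simp
      qed
      then show False using k1 by simp
    qed
    have rowk: "(\<Sum>b<n. u k b) = (\<Sum>b<n. v k b)" using uV v kn by (simp add: vertices_def)
    obtain y0 where y0: "u k y0 \<noteq> v k y0" using k1 by blast
    have y0n: "y0 < n" using y0 vert_out[OF uV] vert_out[OF v] by (metis not_less)
    obtain j where j: "j < n" "u k j < v k j"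
    proof -
      have "\<exists>j<n. u k j < v k j"
      proof (rule ccontr)
        assume nt: "\<not> ?thesis"
        then have "\<forall>x\<in>{..<n}. v k x \<le> u k x" by auto
        moreover have "\<exists>x\<in>{..<n}. v k x < u k x" using y0 y0n nt by force
        ultimately have "(\<Sum>b<n. v k b) < (\<Sum>b<n. u k b)" by (intro sum_strict_mono_ex1) auto
        then show False using rowk by simp
      qed
      then show ?thesis using that by blast
    qed
    obtain l where l: "l < n" "u k l > v k l"
    proof -
      have "\<exists>l<n. u k l > v k l"
      proof (rule ccontr)
        assume "\<not> ?thesis"
        then have "\<forall>x\<in>{..<n}. u k x \<le> v k x" by auto
        moreover have "\<exists>x\<in>{..<n}. u k x < v k x" using j by force
        ultimately have "(\<Sum>b<n. u k b) < (\<Sum>b<n. v k b)" by (intro sum_strict_mono_ex1) auto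
        then show False using rowk by simp
      qed
      then show ?thesis using that by blast
    qed
    have jl: "j \<noteq> l" using j l by auto
    obtain a where a: "k < a" "a < n" "u a j > v a j"
    proof -
      have "\<exists>a. k < a \<and> a < n \<and> u a j > v a j"
      proof (rule ccontr)
        assume na: "\<not> ?thesis"
        have "\<forall>x\<in>{..<n}. u x j \<le> v x j"
        proof
          fix x assume "x \<in> {..<n}"
          then show "u x j \<le> v x j" using na k2[of x j] j
            by (cases "x < k"; cases "x = k") auto
        qed
        moreover have "\<exists>x\<in>{..<n}. u x j < v x j" using j kn by force
        ultimately have "(\<Sum>x<n. u x j) < (\<Sum>x<n. v x j)" by (intro sum_strict_mono_ex1) auto
        then show False using uV v j by (simp add: vertices_def)
      qed
      then show ?thesis using that by blast
    qed
    define u' where "u' = (\<lambda>x y. u x y + sw k j a l x y)"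
    have ue: "u' x y = u x y + (if x = k \<and> y = j then 1 else 0) + (if x = a \<and> y = l then 1 else 0)
       - (if x = k \<and> y = l then 1 else 0) - (if x = a \<and> y = j then 1 else 0)" for x y
      by (simp add: u'_def sw_def emat_def)
    have vnn: "\<And>x y. v x y \<ge> 0" "\<And>x y. u x y \<ge> 0" using v uV by (auto simp: vertices_def)
    have ka: "k \<noteq> a" using a by simp
    have u'V: "u' \<in> vertices n r"
      unfolding vertices_def
    proof (intro CollectI conjI allI impI)
      fix x y assume "n \<le> x \<or> n \<le> y"
      then show "u' x y = 0" using ue[of x y] vert_out[OF uV, of x y] kn a j l by auto
    next
      fix x y show "0 \<le> u' x y"
        using ue[of x y] vnn[of x y] vnn(1)[of k l] vnn(1)[of a j] l a jl ka by auto
    next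
      fix x assume "x < n"
      then show "(\<Sum>y<n. u' x y) = int r" using uV j l
        by (simp add: u'_def sum.distrib sum_sw_row vertices_def)
    next
      fix y assume "y < n"
      then show "(\<Sum>x<n. u' x y) = int r" using uV kn a
        by (simp add: u'_def sum.distrib sum_sw_col vertices_def)
    qed
    have edge: "(u, u') \<in> edges n r"
    proof -
      have "(\<lambda>x y. u x y - u' x y) = (\<lambda>x y. (-1) * sw k j a l x y)" by (simp add: u'_def)
      moreover have "(\<lambda>x y. (-1) * sw k j a l x y) \<in> moves n"
        using moves_any[of k a n j l "-1"] ka kn a j l jl by simp
      ultimately show ?thesis using uV u'V by (simp add: edges_def)
    qed
    have le1: "max 0 (v x y - u' x y) \<le> max 0 (v x y - u x y)" for x y
      using ue[of x y] l a jl ka by auto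
    have lt1: "max 0 (v k j - u' k j) < max 0 (v k j - u k j)"
      using ue[of k j] j jl ka by auto
    have Tlt: "T n v u' < T n v u" unfolding T_def
    proof (rule sum_strict_mono_ex1)
      show "\<forall>x\<in>{..<n-1}. (\<Sum>b<n. max 0 (v x b - u' x b)) \<le> (\<Sum>b<n. max 0 (v x b - u x b))"
        using le1 by (auto intro: sum_mono)
      show "\<exists>x\<in>{..<n-1}. (\<Sum>b<n. max 0 (v x b - u' x b)) < (\<Sum>b<n. max 0 (v x b - u x b))"
      proof (rule bexI[of _ k])
        show "(\<Sum>b<n. max 0 (v k b - u' k b)) < (\<Sum>b<n. max 0 (v k b - u k b))"
          using le1 lt1 j by (intro sum_strict_mono_ex1 ballI bexI[of _ j]) auto
      qed (use kn1 in auto)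
    qed simp
    then have "nat (T n v u') < nat (T n v u)" using T_nonneg[of n v u'] by simp
    from less.hyps[OF this u'V] obtain m' where m': "(u', v) \<in> edges n r ^^ m'" "int m' \<le> T n v u'"
      by blast
    have "(u, v) \<in> edges n r ^^ Suc m'" using relpow_Suc_I2[OF edge m'(1)] .
    moreover have "int (Suc m') \<le> T n v u" using m'(2) Tlt by simp
    ultimately show ?thesis by blast
  qed
qed



definition nxt :: "nat \<Rightarrow> nat \<Rightarrow> nat" where "nxt n a = (if a = n - 1 then 0 else Suc a)"
definition prv :: "nat \<Rightarrow> nat \<Rightarrow> nat" where "prv n b = (if b = 0 then n - 1 else b - 1)"

lemma nxt_prv: "a < n \<Longrightarrow> b < n \<Longrightarrow> (b = nxt n a) = (a = prv n b)"
  by (auto simp: nxt_def prv_def)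

definition idm :: "nat \<Rightarrow> nat \<Rightarrow> imat" where
  "idm n r = (\<lambda>a b. if a < n \<and> b < n \<and> b = a then int r else 0)"
definition cyc :: "nat \<Rightarrow> nat \<Rightarrow> imat" where
  "cyc n r = (\<lambda>a b. if a < n \<and> b < n \<and> b = nxt n a then int r else 0)"

lemma idm_V: "idm n r \<in> vertices n r"
  unfolding vertices_def
proof (intro CollectI conjI allI impI)
  fix a assume a: "a < n"
  have "(\<Sum>b<n. idm n r a b) = (\<Sum>b<n. if b = a then int r else 0)"
    using a by (intro sum.cong) (auto simp: idm_def)
  then show "(\<Sum>b<n. idm n r a b) = int r" using a by simp
next
  fix b assume b: "b < n"
  have "(\<Sum>a<n. idm n r a b) = (\<Sum>a<n. if b = a then int r else 0)"
    using b by (intro sum.cong) (auto simp: idm_def)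
  then show "(\<Sum>a<n. idm n r a b) = int r" using b by simp
qed (auto simp: idm_def)

lemma cyc_V: "n \<ge> 1 \<Longrightarrow> cyc n r \<in> vertices n r"
  unfolding vertices_def
proof (intro CollectI conjI allI impI)
  assume n: "n \<ge> 1"
  fix a assume a: "a < n"
  have "(\<Sum>b<n. cyc n r a b) = (\<Sum>b<n. if b = nxt n a then int r else 0)"
    using a by (intro sum.cong) (auto simp: cyc_def)
  moreover have "nxt n a < n" using a n by (auto simp: nxt_def)
  ultimately show "(\<Sum>b<n. cyc n r a b) = int r" by simp
next
  assume n: "n \<ge> 1"
  fix b assume b: "b < n"
  have "(\<Sum>a<n. cyc n r a b) = (\<Sum>a<n. if a = prv n b then int r else 0)"
    using b by (intro sum.cong) (auto simp: cyc_def nxt_prv)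
  moreover have "prv n b < n" using b n by (auto simp: prv_def)
  ultimately show "(\<Sum>a<n. cyc n r a b) = int r" by simp
qed (auto simp: cyc_def)

lemma phi_idm: "phi n (idm n r) = int n * int r"
proof -
  have "(\<Sum>b<n. if b \<le> a then idm n r a b else 0) = int r" if "a < n" for a
  proof -
    have "(\<Sum>b<n. if b \<le> a then idm n r a b else 0) = (\<Sum>b<n. if b = a then int r else 0)"
      using that by (intro sum.cong) (auto simp: idm_def)
    then show ?thesis using that by simp
  qed
  then show ?thesis unfolding phi_def by simp
qed

lemma phi_cyc: assumes "n \<ge> 1" shows "phi n (cyc n r) = int r"
proof -
  have "(\<Sum>b<n. if b \<le> a then cyc n r a b else 0) = (if a = n - 1 then int r else 0)" if "a < n" for a
  proof -
    have "(\<Sum>b<n. if b \<le> a then cyc n r a b else 0)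
        = (\<Sum>b<n. if b = nxt n a then (if nxt n a \<le> a then int r else 0) else 0)"
      using that by (intro sum.cong) (auto simp: cyc_def)
    moreover have "nxt n a < n" using that assms by (auto simp: nxt_def)
    moreover have "(nxt n a \<le> a) = (a = n - 1)" using that by (auto simp: nxt_def)
    ultimately show ?thesis by simp
  qed
  then have "phi n (cyc n r) = (\<Sum>a<n. if a = n - 1 then int r else 0)"
    unfolding phi_def by (intro sum.cong) auto
  then show ?thesis using assms by simp
qed

theorem proposition2p10:
  fixes n r :: nat
  assumes "n \<ge> 1" and "r \<ge> 1"
  shows "connected_G n r \<and> diameter n r = (n - 1) * r"
proof
  have up: "\<exists>m. (u,v) \<in> edges n r ^^ m \<and> m \<le> (n-1)*r"
    if uv: "u \<in> vertices n r" "v \<in> vertices n r" for u v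
  proof -
    obtain m where "(u,v) \<in> edges n r ^^ m" "int m \<le> T n v u" using upper[of v n r u] uv by blast
    moreover have "T n v u \<le> int ((n-1)*r)" using T_bound uv by blast
    ultimately have "int m \<le> int ((n-1)*r)" "(u,v) \<in> edges n r ^^ m" by linarith+
    then show ?thesis by (intro exI[of _ m]) (simp only: of_nat_le_iff)
  qed
  show "connected_G n r" unfolding connected_G_def
    using up relpow_imp_rtrancl by blast
  have gle: "gdist n r u v \<le> (n-1)*r" if uv: "u \<in> vertices n r" "v \<in> vertices n r" for u v
  proof -
    obtain m where m: "(u,v) \<in> edges n r ^^ m" "m \<le> (n-1)*r" using up[OF uv] by blast
    have "gdist n r u v \<le> m" unfolding gdist_def using m(1) by (rule Least_le)
    then show ?thesis using m(2) by simp
  qed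
  let ?u = "idm n r" and ?v = "cyc n r"
  have uV: "?u \<in> vertices n r" and vV: "?v \<in> vertices n r" using idm_V cyc_V assms by auto
  have "gdist n r ?u ?v \<ge> (n-1)*r"
  proof -
    obtain m where m: "(?u,?v) \<in> edges n r ^^ m" using up uV vV by blast
    have p: "(?u,?v) \<in> edges n r ^^ gdist n r ?u ?v" unfolding gdist_def
      using m by (rule LeastI)
    have "\<bar>phi n ?u - phi n ?v\<bar> \<le> int (gdist n r ?u ?v)" using phi_path[OF p] .
    moreover have "phi n ?u - phi n ?v = int ((n-1)*r)"
      using phi_idm phi_cyc assms by (simp add: of_nat_diff algebra_simps)
    ultimately have "int ((n-1)*r) \<le> int (gdist n r ?u ?v)" by linarith
    then show ?thesis by (simp only: of_nat_le_iff)
  qed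
  then have geq: "gdist n r ?u ?v = (n-1)*r" using gle uV vV by (simp add: le_antisym)
  let ?S = "{gdist n r u v | u v. u \<in> vertices n r \<and> v \<in> vertices n r}"
  have "?S \<subseteq> {..(n-1)*r}" using gle by auto
  then have fin: "finite ?S" by (rule finite_subset) simp
  have mem: "(n-1)*r \<in> ?S" using geq uV vV by (metis (mono_tags, lifting) mem_Collect_eq)
  show "diameter n r = (n - 1) * r" unfolding diameter_def
    using gle mem fin by (intro Max_eqI) auto
qed

end
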